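(* For integers $r\geq 3$ and $n\geq 2r+3$, the complex $\Delta_2^t(C_n^r)$ is simply connected, i.e. $\pi_1(\Delta_2^t(C_n^r))\cong 0$.
   Context: All graphs are finite and simple; $\alpha(G)$ is the independence number and $G[S]$ the induced subgraph on $S$. $\Delta_2^t(G)=\{\sigma\subseteq V(G):\ \alpha(G[V(G)\setminus\sigma])\geq 2\}$. $C_n$ is the cycle on $\{1,\dots,n\}$ with edges $\{i,i+1\}$ and $\{1,n\}$; $C_n^r$ is the graph on the same vertices where distinct vertices are adjacent iff their distance in $C_n$ is at most $r$. *)

theory Defs
  imports "HOL-Analysis.Analysis"
begin

text \<open>Simple graphs are given by a vertex set V and a symmetric irreflexive
  adjacency predicate E.\<close>

definition independent_set :: "(nat \<Rightarrow> nat \<Rightarrow> bool) \<Rightarrow> nat set \<Rightarrow> bool" where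
  "independent_set E S \<longleftrightarrow> (\<forall>u\<in>S. \<forall>v\<in>S. \<not> E u v)"

definition indep_number :: "(nat \<Rightarrow> nat \<Rightarrow> bool) \<Rightarrow> nat set \<Rightarrow> nat" where
  "indep_number E W = Max {card S | S. S \<subseteq> W \<and> independent_set E S}"

definition cycle_dist :: "nat \<Rightarrow> nat \<Rightarrow> nat \<Rightarrow> nat" where
  "cycle_dist n i j = min (if i \<le> j then j - i else i - j) (n - (if i \<le> j then j - i else i - j))"

definition cyc_pow_adj :: "nat \<Rightarrow> nat \<Rightarrow> nat \<Rightarrow> nat \<Rightarrow> bool" where
  "cyc_pow_adj n r i j \<longleftrightarrow> i \<in> {1..n} \<and> j \<in> {1..n} \<and> i \<noteq> j \<and> cycle_dist n i j \<le> r"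

definition Delta2t :: "nat set \<Rightarrow> (nat \<Rightarrow> nat \<Rightarrow> bool) \<Rightarrow> nat set set" where
  "Delta2t V E = {\<sigma>. \<sigma> \<subseteq> V \<and> indep_number E (V - \<sigma>) \<ge> 2}"

text \<open>Geometric realization of a simplicial complex on finitely many natural-number
  vertices: points x :: nat \<Rightarrow> real (product topology) that are convex
  combinations of the vertices of some face.\<close>
definition geom_realization :: "nat set set \<Rightarrow> (nat \<Rightarrow> real) set" where
  "geom_realization K = {x. \<exists>\<sigma>\<in>K. finite \<sigma> \<and> (\<forall>i. 0 \<le> x i) \<and> (\<forall>i. i \<notin> \<sigma> \<longrightarrow> x i = 0)
                              \<and> sum x \<sigma> = 1}"

end

theory Submission imports Defs begin


type_synonym bvec = "nat \<Rightarrow>\<^sub>C real"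

definition vtx :: "nat \<Rightarrow> bvec" where
  "vtx v = Bcontfun (\<lambda>j. if j = v then 1 else 0)"

lemma vtx_apply [simp]: "apply_bcontfun (vtx v) j = (if j = v then 1 else 0)"
proof -
  have "(\<lambda>j::nat. if j = v then 1 else (0::real)) \<in> bcontfun"
    by (rule bcontfun_normI[where b=1]) auto
  then show ?thesis unfolding vtx_def by (simp add: Bcontfun_inverse)
qed

definition spx :: "nat set \<Rightarrow> bvec set" where
  "spx \<sigma> = {y. (\<forall>i. 0 \<le> apply_bcontfun y i) \<and> (\<forall>i. i \<notin> \<sigma> \<longrightarrow> apply_bcontfun y i = 0)
              \<and> sum (apply_bcontfun y) \<sigma> = 1}"

lemma convex_spx: "convex (spx \<sigma>)"
  unfolding convex_def spx_def
  by (auto simp: sum.distrib sum_distrib_left[symmetric])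

lemma spx_mono: assumes "finite \<sigma>" "\<tau> \<subseteq> \<sigma>" shows "spx \<tau> \<subseteq> spx \<sigma>"
proof
  fix y assume y: "y \<in> spx \<tau>"
  have "sum (apply_bcontfun y) \<sigma> = sum (apply_bcontfun y) \<tau>"
    using y assms by (intro sum.mono_neutral_right) (auto simp: spx_def)
  with y assms show "y \<in> spx \<sigma>" by (auto simp: spx_def)
qed

lemma vtx_spx: assumes "finite \<sigma>" "v \<in> \<sigma>" shows "vtx v \<in> spx \<sigma>"
  using assms by (auto simp: spx_def sum.delta)

lemma spx_supp: "y \<in> spx \<sigma> \<Longrightarrow> apply_bcontfun y v \<noteq> 0 \<Longrightarrow> v \<in> \<sigma>"
  by (auto simp: spx_def)

lemma spx_nonempty_supp: "y \<in> spx \<sigma> \<Longrightarrow> \<sigma> \<noteq> {}"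
  by (auto simp: spx_def)

lemma hom_in_sc:
  fixes S C :: "'a::real_normed_vector set"
  assumes "simply_connected C" "C \<subseteq> S" "path g" "path h" "path_image g \<subseteq> C" "path_image h \<subseteq> C"
    "pathstart h = pathstart g" "pathfinish h = pathfinish g"
  shows "homotopic_paths S g h"
  using assms unfolding simply_connected_eq_homotopic_paths
  by (meson homotopic_paths_subset)

locale cx =
  fixes V :: "nat set" and K :: "nat set set"
  assumes finV: "finite V" and KV: "\<And>\<sigma>. \<sigma> \<in> K \<Longrightarrow> \<sigma> \<subseteq> V"
    and Kdown: "\<And>\<sigma> \<tau>. \<sigma> \<in> K \<Longrightarrow> \<tau> \<subseteq> \<sigma> \<Longrightarrow> \<tau> \<in> K"
    and K3: "\<And>\<tau>. \<tau> \<subseteq> V \<Longrightarrow> card \<tau> \<le> 3 \<Longrightarrow> \<tau> \<in> K"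
    and Vne: "V \<noteq> {}"
begin

definition Rb :: "bvec set" where "Rb = (\<Union>\<sigma>\<in>K. spx \<sigma>)"

definition St :: "nat \<Rightarrow> bvec set" where "St v = {y \<in> Rb. 0 < apply_bcontfun y v}"

lemma finK: "\<sigma> \<in> K \<Longrightarrow> finite \<sigma>"
  using KV finV finite_subset by blast

lemma spx_Rb: "\<sigma> \<in> K \<Longrightarrow> spx \<sigma> \<subseteq> Rb"
  by (auto simp: Rb_def)

lemma St_spx:
  assumes "y \<in> St v" obtains \<sigma> where "\<sigma> \<in> K" "y \<in> spx \<sigma>" "v \<in> \<sigma>"
  using assms spx_supp unfolding St_def Rb_def by fastforce

lemma St2_spx:
  assumes "y \<in> St u" "y \<in> St v"
  obtains \<sigma> where "\<sigma> \<in> K" "y \<in> spx \<sigma>" "vtx u \<in> spx \<sigma>" "vtx v \<in> spx \<sigma>"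
proof -
  obtain \<sigma> where "\<sigma> \<in> K" "y \<in> spx \<sigma>" "u \<in> \<sigma>" using St_spx[OF assms(1)] by blast
  moreover have "v \<in> \<sigma>" using assms(2) \<open>y \<in> spx \<sigma>\<close> spx_supp unfolding St_def by fastforce
  ultimately show ?thesis using that vtx_spx finK by blast
qed

lemma three_spx:
  assumes "u \<in> V" "v \<in> V" "w \<in> V"
  obtains \<sigma> where "\<sigma> \<in> K" "vtx u \<in> spx \<sigma>" "vtx v \<in> spx \<sigma>" "vtx w \<in> spx \<sigma>"
proof -
  have "card {u,v,w} \<le> 3" by (simp add: card_insert_if)
  then have "{u,v,w} \<in> K" using assms by (intro K3) auto
  then show ?thesis using that vtx_spx by (meson finite.emptyI finite.insertI insertCI)
qed

lemma vtx_St: "v \<in> V \<Longrightarrow> vtx v \<in> St v"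
  using vtx_spx[of "{v}" v] spx_Rb[of "{v}"] K3[of "{v}"] unfolding St_def by auto

lemma seg_St: assumes "y \<in> St v" shows "closed_segment (vtx v) y \<subseteq> St v"
proof
  fix z assume z: "z \<in> closed_segment (vtx v) y"
  obtain \<sigma> where s: "\<sigma> \<in> K" "y \<in> spx \<sigma>" "v \<in> \<sigma>" using St_spx[OF assms] by blast
  have "closed_segment (vtx v) y \<subseteq> spx \<sigma>"
    using s vtx_spx finK convex_spx by (intro closed_segment_subset) auto
  with z s have zR: "z \<in> Rb" using spx_Rb by blast
  from z obtain u where u: "0 \<le> u" "u \<le> 1" "z = (1 - u) *\<^sub>R vtx v + u *\<^sub>R y"
    unfolding closed_segment_def by blast
  have "0 < apply_bcontfun y v" using assms by (simp add: St_def)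
  then have "0 < (1 - u) + u * apply_bcontfun y v"
    using u by (smt (verit) mult_nonneg_nonneg mult_pos_pos)
  then show "z \<in> St v" using zR u by (simp add: St_def)
qed

lemma starlike_St: assumes "v \<in> V" shows "starlike (St v)"
  unfolding starlike_def using vtx_St[OF assms] seg_St by blast

lemma hom_St:
  assumes "v \<in> V" "path g" "path h" "path_image g \<subseteq> St v" "path_image h \<subseteq> St v"
    "pathstart h = pathstart g" "pathfinish h = pathfinish g"
  shows "homotopic_paths Rb g h"
  using assms starlike_imp_simply_connected[OF starlike_St[OF assms(1)]]
  by (intro hom_in_sc[where C="St v"]) (auto simp: St_def)

lemma hom_spx:
  assumes "\<sigma> \<in> K" "path g" "path h" "path_image g \<subseteq> spx \<sigma>" "path_image h \<subseteq> spx \<sigma>"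
    "pathstart h = pathstart g" "pathfinish h = pathfinish g"
  shows "homotopic_paths Rb g h"
  using assms convex_imp_simply_connected[OF convex_spx] spx_Rb
  by (intro hom_in_sc[where C="spx \<sigma>"]) auto

lemma big_coord: assumes "y \<in> Rb" shows "\<exists>v\<in>V. 1 / real (card V) \<le> apply_bcontfun y v"
proof (rule ccontr)
  assume "\<not> ?thesis"
  then have lt: "\<And>v. v \<in> V \<Longrightarrow> apply_bcontfun y v < 1 / real (card V)" by force
  obtain \<sigma> where s: "\<sigma> \<in> K" "y \<in> spx \<sigma>" using assms by (auto simp: Rb_def)
  have "sum (apply_bcontfun y) V = sum (apply_bcontfun y) \<sigma>"
    using s KV finV by (intro sum.mono_neutral_right) (auto simp: spx_def)
  also have "\<dots> = 1" using s by (simp add: spx_def)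
  finally have "1 = sum (apply_bcontfun y) V" by simp
  also have "\<dots> < sum (\<lambda>_. 1 / real (card V)) V"
    using lt finV Vne by (intro sum_strict_mono) auto
  also have "\<dots> = 1" using finV Vne by simp
  finally show False by simp
qed

end


context cx begin

lemma loop_null:
  assumes p: "path p" "path_image p \<subseteq> Rb" "pathfinish p = pathstart p"
  shows "homotopic_paths Rb p (linepath (pathstart p) (pathstart p))"
proof -
  define c where "c = 1 / real (card V)"
  have c0: "0 < c" using finV Vne by (simp add: c_def card_gt_0_iff)
  have pR: "t \<in> {0..1} \<Longrightarrow> p t \<in> Rb" for t using p(2) by (auto simp: path_image_def)
  have "uniformly_continuous_on {0..1} p"
    using p(1) by (intro compact_uniformly_continuous) (auto simp: path_def)
  then obtain d where d: "d > 0" "\<And>s t. s \<in> {0..1} \<Longrightarrow> t \<in> {0..1} \<Longrightarrow> dist t s < d \<Longrightarrow> dist (p t) (p s) < c"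
    unfolding uniformly_continuous_on_def using c0 by metis
  obtain N :: nat where N: "N > 0" "inverse (real N) < d" using ex_inverse_of_nat_less[OF d(1)] by blast
  define T where "T k = real k / real N" for k :: nat
  have T01: "k \<le> N \<Longrightarrow> T k \<in> {0..1}" for k using N by (auto simp: T_def)
  have Tmono: "T k \<le> T (Suc k)" for k by (simp add: T_def divide_right_mono)
  have cover: "\<exists>v\<in>V. \<forall>t\<in>{T k..T (Suc k)}. p t \<in> St v" if k: "k < N" for k
  proof -
    have tk: "T k \<in> {0..1}" using k T01 by simp
    obtain v where v: "v \<in> V" "c \<le> apply_bcontfun (p (T k)) v"
      using big_coord[OF pR[OF tk]] unfolding c_def by blast
    have "p t \<in> St v" if t: "t \<in> {T k..T (Suc k)}" for t
    proof -
      have t01: "t \<in> {0..1}" using t T01[of k] T01[of "Suc k"] k by auto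
      have "T (Suc k) - T k = inverse (real N)" using N by (simp add: T_def field_simps)
      then have "dist t (T k) \<le> inverse (real N)"
        using t by (auto simp: dist_real_def)
      then have "dist (p t) (p (T k)) < c" using d N tk t01 by force
      moreover have "dist (apply_bcontfun (p t) v) (apply_bcontfun (p (T k)) v) \<le> dist (p t) (p (T k))"
        by (rule dist_bounded)
      ultimately have "0 < apply_bcontfun (p t) v" using v by (auto simp: dist_real_def)
      then show ?thesis using pR[OF t01] by (simp add: St_def)
    qed
    then show ?thesis using v by blast
  qed
  then obtain w where w: "\<And>k. k < N \<Longrightarrow> w k \<in> V" "\<And>k t. k < N \<Longrightarrow> t \<in> {T k..T (Suc k)} \<Longrightarrow> p t \<in> St (w k)"
    by metis
  define a where "a = vtx (w 0)"
  define Q where "Q m = linepath (p 0) a +++ (linepath a (vtx (w m)) +++ linepath (vtx (w m)) (p (T (Suc m))))" for m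
  have segR: "path_image (linepath x y) \<subseteq> Rb" if "x \<in> spx \<sigma>" "y \<in> spx \<sigma>" "\<sigma> \<in> K" for x y \<sigma>
    using that closed_segment_subset[OF _ _ convex_spx] spx_Rb by fastforce
  have segS: "path_image (linepath x y) \<subseteq> spx \<sigma>" if "x \<in> spx \<sigma>" "y \<in> spx \<sigma>" for x y \<sigma>
    using that closed_segment_subset[OF _ _ convex_spx] by fastforce
  have segSt1: "path_image (linepath (vtx v) y) \<subseteq> St v" if "y \<in> St v" for y v
    using seg_St[OF that] by simp
  have segSt2: "path_image (linepath y (vtx v)) \<subseteq> St v" if "y \<in> St v" for y v
    using seg_St[OF that] by (simp add: closed_segment_commute)
  have StR: "St v \<subseteq> Rb" for v by (auto simp: St_def)
  have T0: "T 0 = 0" by (simp add: T_def)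
  have p0: "p 0 \<in> St (w 0)" using w(2)[of 0 0] N T01[of 1] by (simp add: T0)
  have Q: "homotopic_paths Rb (subpath 0 (T (Suc m)) p) (Q m)" if "m < N" for m
    using that
  proof (induction m)
    case 0
    have pT1: "p (T 1) \<in> St (w 0)" using w(2)[of 0 "T 1"] N T01[of 1] by (simp add: T0)
    have im: "path_image (subpath 0 (T 1) p) \<subseteq> St (w 0)"
      using w(2)[of 0] N T01[of 1] by (auto simp: path_image_subpath T0)
    show ?case unfolding Q_def One_nat_def[symmetric] a_def
      apply (rule hom_St[OF w(1)[OF N(1)]])
      using p(1) T01[of 1] N im p0 pT1 vtx_St[OF w(1)[OF N(1)]] segSt1 segSt2
      by (auto simp: path_image_join path_subpath)
  next
    case (Suc m)
    then have mN: "m < N" "Suc m < N" by auto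
    define t1 where "t1 = T (Suc m)"
    define t2 where "t2 = T (Suc (Suc m))"
    define y where "y = p t1"
    define bb where "bb = vtx (w m)"
    define cc where "cc = vtx (w (Suc m))"
    define z where "z = p t2"
    have t1: "t1 \<in> {0..1}" "t2 \<in> {0..1}" "0 \<le> t1" "t1 \<le> t2"
      using T01[of "Suc m"] T01[of "Suc (Suc m)"] mN N by (auto simp: t1_def t2_def T_def divide_right_mono)
    have yS1: "y \<in> St (w m)" using w(2)[of m t1] mN t1 Tmono[of m] by (simp add: y_def t1_def)
    have yS2: "y \<in> St (w (Suc m))" using w(2)[of "Suc m" t1] mN t1 by (auto simp: y_def t1_def T_def divide_right_mono)
    have zS2: "z \<in> St (w (Suc m))" using w(2)[of "Suc m" t2] mN t1 by (auto simp: z_def t2_def T_def divide_right_mono)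
    have wV: "w 0 \<in> V" "w m \<in> V" "w (Suc m) \<in> V" using w(1) mN by auto
    have aS: "a \<in> St (w 0)" "bb \<in> St (w m)" "cc \<in> St (w (Suc m))"
      using vtx_St wV by (auto simp: a_def bb_def cc_def)
    have p0R: "p 0 \<in> Rb" "a \<in> Rb" "bb \<in> Rb" "cc \<in> Rb" "y \<in> Rb" "z \<in> Rb"
      using p0 aS yS1 zS2 StR by blast+
    obtain \<sigma>1 where s1: "\<sigma>1 \<in> K" "y \<in> spx \<sigma>1" "bb \<in> spx \<sigma>1" "cc \<in> spx \<sigma>1"
      using St2_spx[OF yS1 yS2] unfolding bb_def cc_def by blast
    obtain \<sigma>2 where s2: "\<sigma>2 \<in> K" "a \<in> spx \<sigma>2" "bb \<in> spx \<sigma>2" "cc \<in> spx \<sigma>2"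
      using three_spx[OF wV] unfolding a_def bb_def cc_def by blast
    have L0: "path_image (linepath (p 0) a) \<subseteq> Rb" using segSt2[OF p0] StR a_def by blast
    have Lab: "path_image (linepath a bb) \<subseteq> Rb" "path_image (linepath bb cc) \<subseteq> Rb"
      "path_image (linepath a cc) \<subseteq> Rb"
      using segR s2 by blast+
    have Lby: "path_image (linepath bb y) \<subseteq> Rb" "path_image (linepath y cc) \<subseteq> Rb"
      "path_image (linepath cc z) \<subseteq> Rb"
      using segR s1 segSt1[OF zS2] StR unfolding cc_def by blast+
    have sub2R: "path_image (subpath t1 t2 p) \<subseteq> St (w (Suc m))"
      using w(2)[of "Suc m"] mN t1 by (auto simp: path_image_subpath t1_def t2_def)
    have h1: "homotopic_paths Rb (subpath 0 t2 p) (subpath 0 t1 p +++ subpath t1 t2 p)"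
      by (rule homotopic_paths_sym, rule homotopic_join_subpaths1) (use p t1 in auto)
    have h2: "homotopic_paths Rb (subpath t1 t2 p) (linepath y cc +++ linepath cc z)"
      apply (rule hom_St[OF wV(3)])
      using p(1) t1 sub2R segSt1[OF zS2] segSt2[OF yS2] unfolding cc_def y_def z_def
      by (auto simp: path_image_join path_subpath)
    have h3: "homotopic_paths Rb (subpath 0 t2 p) (Q m +++ (linepath y cc +++ linepath cc z))"
    proof -
      have IH: "homotopic_paths Rb (subpath 0 t1 p) (Q m)" using Suc.IH mN by (simp add: t1_def)
      show ?thesis using homotopic_paths_trans[OF h1 homotopic_paths_join[OF IH h2]] by simp
    qed
    have tri1: "homotopic_paths Rb (linepath bb y +++ linepath y cc) (linepath bb cc)"
      by (rule hom_spx[OF s1(1)]) (use s1 segS in \<open>auto simp: path_image_join\<close>)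
    have tri2: "homotopic_paths Rb (linepath a bb +++ linepath bb cc) (linepath a cc)"
      by (rule hom_spx[OF s2(1)]) (use s2 segS in \<open>auto simp: path_image_join\<close>)
    let ?L0 = "linepath (p 0) a" and ?M = "linepath a bb" and ?R = "linepath bb y"
      and ?A = "linepath y cc" and ?B = "linepath cc z"
    have pim: "path_image (?M +++ ?R) \<subseteq> Rb" "path_image (?A +++ ?B) \<subseteq> Rb"
      "path_image (?R +++ ?A) \<subseteq> Rb" "path_image (?M +++ linepath bb cc) \<subseteq> Rb"
      "path_image (linepath bb cc +++ ?B) \<subseteq> Rb" "path_image (?R +++ (?A +++ ?B)) \<subseteq> Rb"
      "path_image ((?R +++ ?A) +++ ?B) \<subseteq> Rb"
      using Lab Lby by (simp_all add: path_image_join)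
    have rL0: "homotopic_paths Rb ?L0 ?L0" using L0 by simp
    have rM: "homotopic_paths Rb ?M ?M" using Lab by simp
    have rB: "homotopic_paths Rb ?B ?B" using Lby by simp
    have a1: "homotopic_paths Rb ((?L0 +++ (?M +++ ?R)) +++ (?A +++ ?B)) (?L0 +++ ((?M +++ ?R) +++ (?A +++ ?B)))"
      by (rule homotopic_paths_sym, rule homotopic_paths_assoc) (use L0 pim in simp_all)
    have a2: "homotopic_paths Rb ((?M +++ ?R) +++ (?A +++ ?B)) (?M +++ (?R +++ (?A +++ ?B)))"
      by (rule homotopic_paths_sym, rule homotopic_paths_assoc) (use Lab pim Lby in simp_all)
    have a3: "homotopic_paths Rb (?R +++ (?A +++ ?B)) ((?R +++ ?A) +++ ?B)"
      by (rule homotopic_paths_assoc) (use Lby in simp_all)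
    have a4: "homotopic_paths Rb ((?R +++ ?A) +++ ?B) (linepath bb cc +++ ?B)"
      by (rule homotopic_paths_join[OF tri1 rB]) simp
    have a5: "homotopic_paths Rb (?M +++ (linepath bb cc +++ ?B)) ((?M +++ linepath bb cc) +++ ?B)"
      by (rule homotopic_paths_assoc) (use Lab Lby in simp_all)
    have a6: "homotopic_paths Rb ((?M +++ linepath bb cc) +++ ?B) (linepath a cc +++ ?B)"
      by (rule homotopic_paths_join[OF tri2 rB]) simp
    have b1: "homotopic_paths Rb (?M +++ (?R +++ (?A +++ ?B))) (linepath a cc +++ ?B)"
      using homotopic_paths_trans[OF homotopic_paths_join[OF rM homotopic_paths_trans[OF a3 a4]] homotopic_paths_trans[OF a5 a6]]
      by simp
    have "homotopic_paths Rb ((?L0 +++ (?M +++ ?R)) +++ (?A +++ ?B)) (?L0 +++ (linepath a cc +++ ?B))"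
      using homotopic_paths_trans[OF a1 homotopic_paths_join[OF rL0 homotopic_paths_trans[OF a2 b1]]]
      by simp
    then have h4: "homotopic_paths Rb (Q m +++ (linepath y cc +++ linepath cc z)) (Q (Suc m))"
      by (simp add: Q_def bb_def cc_def z_def t2_def y_def t1_def)
    show ?case using homotopic_paths_trans[OF h3 h4] by (simp add: t2_def)
  qed
  obtain M where M: "N = Suc M" using N by (cases N) auto
  have TN: "T (Suc M) = 1" using N M by (simp add: T_def)
  have hp: "homotopic_paths Rb p (Q M)" using Q[of M] M TN by simp
  have p1: "p 1 = p 0" using p(3) by (simp add: pathstart_def pathfinish_def)
  have pM: "p 0 \<in> St (w M)" using w(2)[of M 1] M T01[of M] TN p1 by auto
  obtain \<sigma> where s: "\<sigma> \<in> K" "p 0 \<in> spx \<sigma>" "vtx (w 0) \<in> spx \<sigma>" "vtx (w M) \<in> spx \<sigma>"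
    using St2_spx[OF p0 pM] by blast
  have "homotopic_paths Rb (Q M) (linepath (p 0) (p 0))"
    by (rule hom_spx[OF s(1)]) (use s segS p1 in \<open>auto simp: Q_def a_def path_image_join TN\<close>)
  then show ?thesis using homotopic_paths_trans[OF hp] by (simp add: pathstart_def)
qed

end


lemma apply_bcontfun_sum:
  assumes "finite A" shows "apply_bcontfun (sum f A) j = (\<Sum>i\<in>A. apply_bcontfun (f i) j)"
  using assms by (induction A rule: finite_induct) auto

lemma cont_eval: "continuous_on S (\<lambda>y::bvec. apply_bcontfun y i)"
proof -
  have "1-lipschitz_on S (\<lambda>y::bvec. apply_bcontfun y i)"
    by (rule lipschitz_onI) (auto intro: dist_bounded)
  then show ?thesis by (rule lipschitz_on_continuous_on)
qed

context cx begin

lemma sc_Rb: "simply_connected Rb"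
  unfolding simply_connected_eq_contractible_path
proof (intro conjI allI impI)
  obtain u0 where u0: "u0 \<in> V" using Vne by blast
  have pc: "path_component Rb x (vtx u0)" if xR: "x \<in> Rb" for x
  proof -
    obtain \<sigma> where s: "\<sigma> \<in> K" "x \<in> spx \<sigma>" using xR by (auto simp: Rb_def)
    obtain v where v: "v \<in> \<sigma>" using spx_nonempty_supp[OF s(2)] by blast
    have vs: "vtx v \<in> spx \<sigma>" using vtx_spx[OF finK[OF s(1)] v] .
    have "path_component (spx \<sigma>) x (vtx v)"
      using convex_imp_path_connected[OF convex_spx] s(2) vs unfolding path_connected_component by simp
    then have 1: "path_component Rb x (vtx v)"
      by (rule path_component_of_subset[OF spx_Rb[OF s(1)]])
    have vV: "v \<in> V" using KV s v by blast
    obtain \<tau> where t: "\<tau> \<in> K" "vtx v \<in> spx \<tau>" "vtx u0 \<in> spx \<tau>"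
      using three_spx[OF vV vV u0] by blast
    have "path_component (spx \<tau>) (vtx v) (vtx u0)"
      using convex_imp_path_connected[OF convex_spx] t(2) t(3) unfolding path_connected_component by simp
    then have "path_component Rb (vtx v) (vtx u0)"
      by (rule path_component_of_subset[OF spx_Rb[OF t(1)]])
    with 1 show ?thesis by (rule path_component_trans)
  qed
  show "path_connected Rb" unfolding path_connected_component
  proof (intro ballI)
    fix x y assume "x \<in> Rb" "y \<in> Rb"
    show "path_component Rb x y"
      using path_component_trans[OF pc[OF \<open>x \<in> Rb\<close>] path_component_sym[OF pc[OF \<open>y \<in> Rb\<close>]]] .
  qed
next
  fix p assume "path p \<and> path_image p \<subseteq> Rb \<and> pathfinish p = pathstart p"
  then show "homotopic_paths Rb p (linepath (pathstart p) (pathstart p))"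
    using loop_null by blast
qed

definition emb :: "(nat \<Rightarrow> real) \<Rightarrow> bvec" where
  "emb x = (\<Sum>i\<in>V. x i *\<^sub>R vtx i)"

lemma emb_apply: "apply_bcontfun (emb x) j = (if j \<in> V then x j else 0)"
  unfolding emb_def using finV by (simp add: apply_bcontfun_sum if_distrib cong: if_cong)

lemma geom_R:
  "simply_connected (geom_realization K) \<and> geom_realization K \<noteq> {}"
proof -
  let ?R = "geom_realization K"
  have memR: "x \<in> ?R \<longleftrightarrow> (\<exists>\<sigma>\<in>K. finite \<sigma> \<and> (\<forall>i. 0 \<le> x i) \<and> (\<forall>i. i \<notin> \<sigma> \<longrightarrow> x i = 0) \<and> sum x \<sigma> = 1)" for x
    unfolding geom_realization_def by (rule mem_Collect_eq)
  have embR: "apply_bcontfun (emb x) = x" if xR: "x \<in> ?R" for x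
  proof
    fix j
    from xR obtain \<sigma> where s: "\<sigma> \<in> K" "\<forall>i. i \<notin> \<sigma> \<longrightarrow> x i = 0"
      unfolding memR by blast
    show "apply_bcontfun (emb x) j = x j"
    proof (cases "j \<in> V")
      case False
      then have "j \<notin> \<sigma>" using KV[OF s(1)] by blast
      then show ?thesis using s(2) False by (simp add: emb_apply)
    qed (simp add: emb_apply)
  qed
  have inv: "emb (apply_bcontfun y) = y" if yR: "y \<in> Rb" for y
  proof (rule bcontfun_eqI)
    fix j
    from yR obtain \<sigma> where s: "\<sigma> \<in> K" "y \<in> spx \<sigma>" unfolding Rb_def by blast
    show "apply_bcontfun (emb (apply_bcontfun y)) j = apply_bcontfun y j"
    proof (cases "j \<in> V")
      case False
      then have "j \<notin> \<sigma>" using KV[OF s(1)] by blast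
      then show ?thesis using s(2) False by (simp add: emb_apply spx_def)
    qed (simp add: emb_apply)
  qed
  have img1: "emb x \<in> Rb" if xR: "x \<in> ?R" for x
  proof -
    obtain \<sigma> where s: "\<sigma> \<in> K" "\<forall>i. 0 \<le> x i" "\<forall>i. i \<notin> \<sigma> \<longrightarrow> x i = 0" "sum x \<sigma> = 1"
      using xR unfolding memR by blast
    then have "emb x \<in> spx \<sigma>" using embR[OF xR] by (simp add: spx_def)
    then show ?thesis using s(1) spx_Rb by blast
  qed
  have img2: "apply_bcontfun y \<in> ?R" if yR: "y \<in> Rb" for y
  proof -
    obtain \<sigma> where s: "\<sigma> \<in> K" "y \<in> spx \<sigma>" using yR unfolding Rb_def by blast
    show ?thesis unfolding memR
      by (rule bexI[OF _ s(1)]) (use s(2) finK[OF s(1)] in \<open>simp add: spx_def\<close>)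
  qed
  have "homeomorphism ?R Rb emb apply_bcontfun"
    unfolding homeomorphism_def
  proof (intro conjI)
    show "continuous_on ?R emb" unfolding emb_def
      by (intro continuous_on_sum continuous_on_scaleR continuous_on_const
          continuous_on_subset[OF continuous_on_product_coordinates]) simp
    show "emb ` ?R = Rb"
    proof
      show "Rb \<subseteq> emb ` ?R"
      proof
        fix y assume "y \<in> Rb"
        then show "y \<in> emb ` ?R" using inv img2 by (metis image_eqI)
      qed
    qed (use img1 in blast)
    show "continuous_on Rb apply_bcontfun"
      by (intro continuous_on_coordinatewise_then_product cont_eval)
    show "apply_bcontfun ` Rb = ?R"
    proof
      show "?R \<subseteq> apply_bcontfun ` Rb"
      proof
        fix x assume "x \<in> ?R"
        then show "x \<in> apply_bcontfun ` Rb" using embR img1 by (metis image_eqI)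
      qed
    qed (use img2 in blast)
    show "\<forall>x\<in>?R. apply_bcontfun (emb x) = x" using embR by blast
    show "\<forall>y\<in>Rb. emb (apply_bcontfun y) = y" using inv by blast
  qed
  then have "?R homeomorphic Rb" unfolding homeomorphic_def by blast
  then have "simply_connected ?R" using homeomorphic_simply_connected_eq sc_Rb by metis
  moreover have "?R \<noteq> {}"
  proof -
    obtain u where u: "u \<in> V" using Vne by blast
    have "{u} \<in> K" using K3[of "{u}"] u by simp
    then have "(\<lambda>j. if j = u then 1 else 0) \<in> ?R" unfolding memR
      by (intro bexI[of _ "{u}"]) auto
    then show ?thesis by blast
  qed
  ultimately show ?thesis by blast
qed

end


lemma indep2:
  assumes "finite W"
  shows "2 \<le> indep_number E W \<longleftrightarrow> (\<exists>S\<subseteq>W. independent_set E S \<and> 2 \<le> card S)"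
proof -
  let ?A = "{card S |S. S \<subseteq> W \<and> independent_set E S}"
  have "?A \<subseteq> card ` Pow W" by blast
  then have fin: "finite ?A" using assms by (meson finite_Pow_iff finite_imageI finite_subset)
  have "0 \<in> ?A" by (auto simp: independent_set_def intro!: exI[of _ "{}"])
  then have ne: "?A \<noteq> {}" by blast
  show ?thesis unfolding indep_number_def Max_ge_iff[OF fin ne] by blast
qed

lemma K3_lemma:
  fixes r n :: nat
  assumes r: "r \<ge> 3" and n: "n \<ge> 2 * r + 3" and \<tau>: "\<tau> \<subseteq> {1..n}" "card \<tau> \<le> 3"
  shows "\<tau> \<in> Delta2t {1..n} (cyc_pow_adj n r)"
proof -
  have fin: "finite \<tau>" using \<tau>(1) finite_subset by blast
  have "\<exists>i\<in>{1..4::nat}. i \<notin> \<tau> \<and> i + r + 1 \<notin> \<tau>"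
  proof (rule ccontr)
    assume "\<not> ?thesis"
    then have h: "\<And>i. i \<in> {1..4} \<Longrightarrow> i \<in> \<tau> \<or> i + r + 1 \<in> \<tau>" by blast
    define f where "f i = (if i \<in> \<tau> then i else i + r + 1)" for i
    have "inj_on f {1..4}"
      unfolding inj_on_def f_def using r by auto
    moreover have "f ` {1..4} \<subseteq> \<tau>"
    proof (rule image_subsetI)
      fix i :: nat assume "i \<in> {1..4}"
      then show "f i \<in> \<tau>" using h[of i] unfolding f_def by (cases "i \<in> \<tau>") simp_all
    qed
    ultimately have "card {1..4::nat} \<le> card \<tau>" using fin by (meson card_inj_on_le)
    then show False using \<tau>(2) by simp
  qed
  then obtain i where i: "i \<in> {1..4}" "i \<notin> \<tau>" "i + r + 1 \<notin> \<tau>" by blast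
  define S where "S = {i, i + r + 1}"
  have SV: "S \<subseteq> {1..n} - \<tau>" using i r n by (auto simp: S_def)
  have cS: "card S = 2" by (simp add: S_def)
  have d1: "cycle_dist n i (i + r + 1) = r + 1" using n by (simp add: cycle_dist_def)
  have d2: "cycle_dist n (i + r + 1) i = r + 1" using n by (simp add: cycle_dist_def)
  have ind: "independent_set (cyc_pow_adj n r) S"
    unfolding independent_set_def S_def cyc_pow_adj_def using d1 d2
    by auto
  have "2 \<le> indep_number (cyc_pow_adj n r) ({1..n} - \<tau>)"
    unfolding indep2[where E="cyc_pow_adj n r" and W="{1..n} - \<tau>", OF finite_Diff[OF finite_atLeastAtMost]]
    by (rule exI[of _ S]) (use SV cS ind in simp)
  then show ?thesis using \<tau>(1) by (simp add: Delta2t_def)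
qed

theorem mainTheorem20:
  fixes r n :: nat
  assumes "r \<ge> 3" and "n \<ge> 2 * r + 3"
  shows "geom_realization (Delta2t {1..n} (cyc_pow_adj n r)) \<noteq> {} \<and>
         simply_connected (geom_realization (Delta2t {1..n} (cyc_pow_adj n r)))"
proof -
  let ?V = "{1..n}" and ?E = "cyc_pow_adj n r"
  have "cx ?V (Delta2t ?V ?E)"
  proof
    show "finite ?V" by simp
    show "\<sigma> \<subseteq> ?V" if "\<sigma> \<in> Delta2t ?V ?E" for \<sigma> using that by (simp add: Delta2t_def)
    show "\<tau> \<in> Delta2t ?V ?E" if "\<sigma> \<in> Delta2t ?V ?E" "\<tau> \<subseteq> \<sigma>" for \<sigma> \<tau>
    proof -
      have s: "\<sigma> \<subseteq> ?V" "2 \<le> indep_number ?E (?V - \<sigma>)" using that(1) by (auto simp: Delta2t_def)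
      then obtain S where "S \<subseteq> ?V - \<sigma>" "independent_set ?E S" "2 \<le> card S"
        using indep2[of "?V - \<sigma>"] by auto
      then have "2 \<le> indep_number ?E (?V - \<tau>)"
        using indep2[of "?V - \<tau>"] that(2) by blast
      then show ?thesis using s that(2) by (auto simp: Delta2t_def)
    qed
    show "\<tau> \<in> Delta2t ?V ?E" if "\<tau> \<subseteq> ?V" "card \<tau> \<le> 3" for \<tau>
      using K3_lemma[OF assms that] .
    show "?V \<noteq> {}" using assms by simp
  qed
  then show ?thesis using cx.geom_R by blast
qed

end
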